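(* Let $\alpha\in\mathbb{C}$ with $\Re(\alpha)>-1/2$ and $\alpha\neq0$. Then for every $n\in\mathbb{N}_0$, $$p_n(x;\alpha)=\sum_{\nu=0}^{n}\left\{\frac{2^{\nu+1}(\alpha+1/2)_\nu}{\nu!}\sum_{\mu=0}^{\nu}\binom{\nu}{\mu}\frac{(-1)^{\mu}\,\Gamma(2\alpha+\mu)}{\Gamma(2\alpha+\mu+\nu+1)}(\alpha+\mu)^{2n+1}\right\}x^{\nu}.$$
   Context: Let $\mathcal{A}$ be the differential operator $\mathcal{A}f(x)=-x^2f''(x)-xf'(x)+x^2f(x)$ on functions of $x>0$, with iterates $\mathcal{A}^n$ ($\mathcal{A}^0$ = identity). For $\alpha\in\mathbb{C}$, $n\in\mathbb{N}_0$, $p_n(x;\alpha)=(-1)^n e^{x}x^{-\alpha}\,\mathcal{A}^n\big(e^{-x}x^{\alpha}\big)$ (a polynomial in $x$ of degree $n$ when $\Re(\alpha)>-1/2$). $(y)_\nu$ is the Pochhammer symbol, $(y)_0=1$, $(y)_\nu=\prod_{j=0}^{\nu-1}(y+j)$. *)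

theory Defs
  imports "HOL-Analysis.Analysis"
begin

definition Aop :: "(real \<Rightarrow> complex) \<Rightarrow> real \<Rightarrow> complex" where
  "Aop f x =
     - ((complex_of_real x)^2 * vector_derivative (\<lambda>t. vector_derivative f (at t)) (at x))
     - complex_of_real x * vector_derivative f (at x)
     + (complex_of_real x)^2 * f x"

definition p_poly :: "nat \<Rightarrow> complex \<Rightarrow> real \<Rightarrow> complex" where
  "p_poly n \<alpha> x =
     (-1)^n * exp (complex_of_real x) * (complex_of_real x) powr (-\<alpha>) *
     (Aop ^^ n) (\<lambda>t. exp (- complex_of_real t) * (complex_of_real t) powr \<alpha>) x"

end

theory Submission
  imports Defs
begin

definition Kc :: "complex \<Rightarrow> nat \<Rightarrow> complex" where
  "Kc a v = 2^(v+1) * pochhammer (a + 1/2) v / of_nat (fact v)"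

definition G :: "complex \<Rightarrow> nat \<Rightarrow> nat \<Rightarrow> complex" where
  "G a k v = Kc a v * (\<Sum>\<mu>=0..v. of_nat (v choose \<mu>) * (-1)^\<mu> / pochhammer (2*a + of_nat \<mu>) (v+1) * (a + of_nat \<mu>)^k)"

lemma poch_nz: assumes "\<forall>m::nat. 2*a + of_nat m \<noteq> (0::complex)"
  shows "pochhammer (2*a + of_nat j) n \<noteq> 0"
proof
  assume "pochhammer (2*a + of_nat j) n = 0"
  then obtain k where "2*a + of_nat j = - of_nat k" by (auto simp: pochhammer_eq_0_iff)
  then have "2*a + of_nat j + of_nat k = 0" by (simp add: algebra_simps)
  then have "2*a + of_nat (j+k) = 0" by (simp add: add.assoc)
  with assms show False by blast
qed

lemma Kc_Suc: "of_nat (Suc v) * Kc a (Suc v) = (2*a + 2 * of_nat v + 1) * Kc a v"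
proof -
  have f: "(of_nat (fact v) :: complex) \<noteq> 0" by simp
  have g: "(of_nat (Suc v) :: complex) \<noteq> 0" by (metis of_nat_eq_0_iff nat.distinct(1))
  have "of_nat (Suc v) * Kc a (Suc v) = of_nat (Suc v) * (2^(v+1) * 2 * (pochhammer (a + 1/2) v * (a + 1/2 + of_nat v)) / (of_nat (Suc v) * of_nat (fact v)))"
    unfolding Kc_def pochhammer_Suc fact_Suc of_nat_mult by (simp add: mult.assoc)
  also have "\<dots> = 2^(v+1) * 2 * (pochhammer (a + 1/2) v * (a + 1/2 + of_nat v)) / of_nat (fact v)"
    by (metis g nonzero_mult_divide_mult_cancel_left times_divide_eq_right)
  also have "\<dots> = (2*a + 2 * of_nat v + 1) * Kc a v"
    unfolding Kc_def by (simp add: algebra_simps)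
  finally show ?thesis .
qed

lemma aux1: fixes P w C D V c s E :: complex
  shows "P \<noteq> 0 \<Longrightarrow> w \<noteq> 0 \<Longrightarrow> C * D = V * c \<Longrightarrow> C * s / (P * w) * E * (D * w) = V * (c * s / P * E)"
  by (simp add: field_simps)

lemma aux2: fixes K X :: complex
  shows "X * (K * (\<Sum>\<mu>\<in>S. T \<mu>)) - K * (\<Sum>\<mu>\<in>S. T \<mu> * Y \<mu>) = K * (\<Sum>\<mu>\<in>S. T \<mu> * (X - Y \<mu>))"
  by (simp add: sum_distrib_left right_diff_distrib sum_subtractf mult_ac)

lemma G_rec:
  assumes nz: "\<forall>m::nat. 2*a + of_nat m \<noteq> (0::complex)"
  shows "G a (k+2) (Suc v) = (a + of_nat (Suc v))^2 * G a k (Suc v) - (2*a + 2* of_nat v + 1) * G a k v"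
proof -
  define z where "z = (\<lambda>\<mu>::nat. 2*a + of_nat \<mu>)"
  have trm: "of_nat (Suc v choose \<mu>) * (-1)^\<mu> / pochhammer (z \<mu>) (Suc v+1) * (a + of_nat \<mu>)^k
         * ((a + of_nat (Suc v))^2 - (a + of_nat \<mu>)^2)
       = of_nat (Suc v) * (of_nat (v choose \<mu>) * (-1)^\<mu> / pochhammer (z \<mu>) (v+1) * (a + of_nat \<mu>)^k)"
    if "\<mu> \<le> Suc v" for \<mu>
  proof -
    have p: "pochhammer (z \<mu>) (Suc v+1) = pochhammer (z \<mu>) (v+1) * (z \<mu> + of_nat (Suc v))"
      by (simp add: pochhammer_Suc)
    have nz1: "pochhammer (z \<mu>) (v+1) \<noteq> 0" using poch_nz[OF nz] z_def by simp
    have nz2: "z \<mu> + of_nat (Suc v) \<noteq> 0" using nz z_def by (metis add.assoc of_nat_add)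
    have b: "of_nat (Suc v choose \<mu>) * (of_nat (Suc v) - of_nat \<mu>) = (of_nat (Suc v) * of_nat (v choose \<mu>) :: complex)"
    proof -
      have "(Suc v - \<mu>) * (Suc v choose \<mu>) = Suc v * (v choose \<mu>)"
        using binomial_absorb_comp[of "Suc v" \<mu>] by (simp only: diff_Suc_1)
      then have "(of_nat ((Suc v - \<mu>) * (Suc v choose \<mu>)) :: complex) = of_nat (Suc v * (v choose \<mu>))" by (rule arg_cong)
      then have "(of_nat (Suc v) - of_nat \<mu>) * of_nat (Suc v choose \<mu>) = (of_nat (Suc v) * of_nat (v choose \<mu>) :: complex)"
        by (simp only: of_nat_mult of_nat_diff[OF that])
      then show ?thesis by (simp only: mult.commute)
    qed
    have d: "(a + of_nat (Suc v))^2 - (a + of_nat \<mu>)^2 = (of_nat (Suc v) - of_nat \<mu>) * (z \<mu> + of_nat (Suc v))"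
      by (simp add: z_def power2_eq_square algebra_simps)
    show ?thesis unfolding p d by (rule aux1[OF nz1 nz2 b])
  qed
  have last0: "of_nat (v choose Suc v) = (0::complex)" by simp
  define T where "T = (\<lambda>\<mu>. of_nat (Suc v choose \<mu>) * (-1)^\<mu> / pochhammer (z \<mu>) (Suc v+1) * (a + of_nat \<mu>)^k)"
  have g1: "G a k (Suc v) = Kc a (Suc v) * (\<Sum>\<mu>=0..Suc v. T \<mu>)" unfolding G_def T_def z_def by simp
  have g2: "G a (k+2) (Suc v) = Kc a (Suc v) * (\<Sum>\<mu>=0..Suc v. T \<mu> * (a + of_nat \<mu>)^2)"
    unfolding G_def T_def z_def
    by (rule arg_cong[where f="\<lambda>s. Kc a (Suc v) * s"], rule sum.cong) (simp_all add: power_add mult_ac power2_eq_square)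
  have "(a + of_nat (Suc v))^2 * G a k (Suc v) - G a (k+2) (Suc v)
     = Kc a (Suc v) * (\<Sum>\<mu>=0..Suc v. T \<mu> * ((a + of_nat (Suc v))^2 - (a + of_nat \<mu>)^2))"
    unfolding g1 g2
    by (rule aux2)
  also have "\<dots> = Kc a (Suc v) * (\<Sum>\<mu>=0..Suc v. of_nat (Suc v) * (of_nat (v choose \<mu>) * (-1)^\<mu> / pochhammer (z \<mu>) (v+1) * (a + of_nat \<mu>)^k))"
    unfolding T_def by (rule arg_cong[where f="\<lambda>s. Kc a (Suc v) * s"], rule sum.cong[OF refl], rule trm) simp
  also have "\<dots> = of_nat (Suc v) * Kc a (Suc v) * (\<Sum>\<mu>=0..v. (of_nat (v choose \<mu>) * (-1)^\<mu> / pochhammer (z \<mu>) (v+1) * (a + of_nat \<mu>)^k))"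
    by (simp add: last0 sum_distrib_left mult_ac)
  also have "\<dots> = (2*a + 2* of_nat v + 1) * G a k v"
    unfolding Kc_Suc G_def z_def by (simp add: mult.assoc)
  finally show ?thesis by (simp add: algebra_simps)
qed

lemma aux3: fixes P u w Q1 Q0 n c1 c0 C m A s :: complex
  assumes "P = u*Q1" "P = Q0*w" "u\<noteq>0" "w\<noteq>0" "Q1\<noteq>0" "Q0\<noteq>0" "n \<noteq> 0"
    "n*c1 = C*(n-m)" "n*c0 = C*m" "w = u + n" "2*A = u + m"
  shows "C * s / P * A = s * c1 / (2*Q1) + s * c0 / (2*Q0)"
proof -
  have c1: "c1 = C*(n-m)/n" using assms(7,8) by (simp add: field_simps)
  have c0: "c0 = C*m/n" using assms(7,9) by (simp add: field_simps)
  have A: "A = (u+m)/2" using assms(11) by (simp add: field_simps)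
  have Q0: "Q0 = u*Q1/w" using assms(1,2,4) by (simp add: field_simps)
  show ?thesis unfolding c1 c0 A Q0 assms(1) using assms(3-7,10)
    by (simp add: field_simps)
qed

lemma G1_zero:
  assumes nz: "\<forall>m::nat. 2*a + of_nat m \<noteq> (0::complex)"
  shows "G a 1 (Suc v) = 0"
proof -
  define y where "y = 2*a"
  define V where "V = (\<lambda>\<mu>::nat. if \<mu> = 0 then 0 else (-1)^(Suc \<mu>) * of_nat (v choose (\<mu>-1)) / (2*pochhammer (y + of_nat \<mu>) (Suc v)))"
  have trm: "of_nat (Suc v choose \<mu>) * (-1)^\<mu> / pochhammer (2*a + of_nat \<mu>) (Suc v+1) * (a + of_nat \<mu>)^1
     = V (Suc \<mu>) - V \<mu>" for \<mu>
  proof (cases \<mu>)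
    case 0
    have q: "pochhammer (y + 1) (Suc v) \<noteq> 0" using poch_nz[OF nz, of 1 "Suc v"] y_def by simp
    have y: "y \<noteq> 0" using nz[rule_format, of 0] y_def by simp
    have "pochhammer y (Suc v + 1) = y * pochhammer (y+1) (Suc v)" by (simp add: pochhammer_rec)
    then show ?thesis using 0 q y unfolding V_def y_def[symmetric] by (simp add: field_simps y_def)
  next
    case (Suc m)
    define u where "u = y + of_nat \<mu>"
    have P1: "pochhammer u (Suc v + 1) = u * pochhammer (u+1) (Suc v)" by (simp add: pochhammer_rec)
    have P2: "pochhammer u (Suc v + 1) = pochhammer u (Suc v) * (u + of_nat (Suc v))" by (simp add: pochhammer_Suc)
    have u: "u \<noteq> 0" using nz[rule_format, of \<mu>] u_def y_def by simp
    have w: "u + of_nat (Suc v) \<noteq> 0" using nz[rule_format, of "\<mu> + Suc v"] u_def y_def by (simp add: add_ac)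
    have q1: "pochhammer (u+1) (Suc v) \<noteq> 0" using poch_nz[OF nz, of "\<mu>+1" "Suc v"] u_def y_def by (simp add: add_ac)
    have q0: "pochhammer u (Suc v) \<noteq> 0" using poch_nz[OF nz, of "\<mu>" "Suc v"] u_def y_def by simp
    have n: "(of_nat (Suc v) :: complex) \<noteq> 0" by (metis of_nat_eq_0_iff nat.distinct(1))
    have b1: "of_nat (Suc v) * of_nat (v choose \<mu>) = (of_nat (Suc v choose \<mu>) * (of_nat (Suc v) - of_nat \<mu>) :: complex)"
    proof (cases "\<mu> \<le> Suc v")
      case True
      have "(Suc v - \<mu>) * (Suc v choose \<mu>) = Suc v * (v choose \<mu>)"
        using binomial_absorb_comp[of "Suc v" \<mu>] by (simp only: diff_Suc_1)
      then have "(of_nat ((Suc v - \<mu>) * (Suc v choose \<mu>)) :: complex) = of_nat (Suc v * (v choose \<mu>))" by (rule arg_cong)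
      then show ?thesis by (simp only: of_nat_mult of_nat_diff[OF True] mult.commute)
    next
      case False then show ?thesis by (simp add: binomial_eq_0)
    qed
    have b0: "of_nat (Suc v) * of_nat (v choose (\<mu>-1)) = (of_nat (Suc v choose \<mu>) * of_nat \<mu> :: complex)"
    proof -
      have "Suc m * (Suc v choose Suc m) = Suc v * (v choose m)" by (rule Suc_times_binomial)
      then have "(of_nat (Suc m * (Suc v choose Suc m)) :: complex) = of_nat (Suc v * (v choose m))" by (rule arg_cong)
      then show ?thesis using Suc by (simp only: of_nat_mult mult.commute diff_Suc_1)
    qed
    have A: "2 * (a + of_nat \<mu>) = u + of_nat \<mu>" unfolding u_def y_def by simp
    have e1: "V (Suc \<mu>) = (-1)^\<mu> * of_nat (v choose \<mu>) / (2 * pochhammer (u+1) (Suc v))"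
      unfolding V_def u_def by (simp add: add_ac)
    have e0: "V \<mu> = - ((-1)^\<mu> * of_nat (v choose (\<mu>-1)) / (2 * pochhammer u (Suc v)))"
      unfolding V_def u_def using Suc by simp
    have "of_nat (Suc v choose \<mu>) * (-1)^\<mu> / pochhammer u (Suc v+1) * (a + of_nat \<mu>)
       = (-1)^\<mu> * of_nat (v choose \<mu>) / (2 * pochhammer (u+1) (Suc v)) + (-1)^\<mu> * of_nat (v choose (\<mu>-1)) / (2 * pochhammer u (Suc v))"
      by (rule aux3[OF P1 P2 u w q1 q0 n b1 b0 _ A]) simp
    then show ?thesis unfolding e1 e0 u_def y_def by simp
  qed
  have "G a 1 (Suc v) = Kc a (Suc v) * (\<Sum>\<mu>=0..Suc v. V (Suc \<mu>) - V \<mu>)"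
    unfolding G_def using trm by simp
  also have "\<dots> = Kc a (Suc v) * (V (Suc (Suc v)) - V 0)" by (subst sum_Suc_diff) simp_all
  also have "\<dots> = 0" unfolding V_def by simp
  finally show ?thesis .
qed


definition MM :: "complex \<Rightarrow> real \<Rightarrow> complex" where
  "MM b t = exp (- complex_of_real t) * complex_of_real t powr b"

lemma MM_shift: "t > 0 \<Longrightarrow> MM (b + of_nat k) t = complex_of_real t ^ k * MM b t"
  unfolding MM_def by (simp add: powr_add powr_nat')

lemma MM_deriv:
  assumes "t > 0"
  shows "(MM b has_vector_derivative (b * MM (b-1) t - MM b t)) (at t)"
proof -
  have nz: "complex_of_real t \<notin> \<real>\<^sub>\<le>\<^sub>0" using assms by (simp add: complex_nonpos_Reals_iff)
  have "((\<lambda>z. exp (- z) * z powr b) has_field_derivative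
      (- exp (- complex_of_real t) * complex_of_real t powr b + exp (- complex_of_real t) * (b * complex_of_real t powr (b - 1)))) (at (complex_of_real t))"
  proof -
    have e: "((\<lambda>z. exp (- z)) has_field_derivative (- exp (- complex_of_real t))) (at (complex_of_real t))"
      by (auto intro!: derivative_eq_intros)
    from DERIV_mult[OF e has_field_derivative_powr[OF nz, of b]] show ?thesis by (simp add: algebra_simps)
  qed
  from has_vector_derivative_real_field[OF this] show ?thesis
    unfolding MM_def[abs_def] by (simp add: algebra_simps)
qed

lemma comb_deriv:
  assumes "t > 0"
  shows "((\<lambda>s. \<Sum>i\<in>A. c i * MM (b i) s) has_vector_derivative
          (\<Sum>i\<in>A. c i * (b i * MM (b i - 1) t - MM (b i) t))) (at t)"
  by (intro has_vector_derivative_sum has_vector_derivative_mult_right MM_deriv assms)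

lemma comb_deriv2:
  assumes "t > 0"
  shows "((\<lambda>s. \<Sum>i\<in>A. c i * (b i * MM (b i - 1) s - MM (b i) s)) has_vector_derivative
          (\<Sum>i\<in>A. c i * (b i * ((b i - 1) * MM (b i - 1 - 1) t - MM (b i - 1) t) - (b i * MM (b i - 1) t - MM (b i) t)))) (at t)"
  by (intro has_vector_derivative_sum has_vector_derivative_mult_right has_vector_derivative_diff MM_deriv assms)

lemma vd_local:
  assumes "\<And>s. s > 0 \<Longrightarrow> g s = h s" "\<And>s. s > 0 \<Longrightarrow> (h has_vector_derivative h' s) (at s)" "t > 0"
  shows "vector_derivative g (at t) = h' t"
proof -
  have "(g has_vector_derivative h' t) (at t)"
    by (rule has_vector_derivative_transform_within_open[OF assms(2)[OF assms(3)], of "{0<..}"])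
       (use assms in auto)
  then show ?thesis by (rule vector_derivative_at)
qed

lemma sum_aux: fixes x y :: complex
  shows "-(x * sum f A) - y * sum g A + x * sum h A = sum (\<lambda>i. -(x*f i) - y*g i + x*h i) A"
  by (simp add: sum_distrib_left sum_subtractf sum.distrib sum_negf)

lemma Aop_comb:
  assumes g: "\<And>s. s > 0 \<Longrightarrow> g s = (\<Sum>i\<in>A. c i * MM (b i) s)" and t: "t > 0"
  shows "Aop g t = (\<Sum>i\<in>A. c i * (- (b i ^ 2) * MM (b i) t + (2 * b i + 1) * MM (b i + 1) t))"
proof -
  have d1: "vector_derivative g (at s) = (\<Sum>i\<in>A. c i * (b i * MM (b i - 1) s - MM (b i) s))" if "s > 0" for s
    by (rule vd_local[OF g comb_deriv that])
  have d2: "vector_derivative (\<lambda>s. vector_derivative g (at s)) (at t) =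
     (\<Sum>i\<in>A. c i * (b i * ((b i - 1) * MM (b i - 1 - 1) t - MM (b i - 1) t) - (b i * MM (b i - 1) t - MM (b i) t)))"
    by (rule vd_local[OF d1 comb_deriv2 t])
  have trm: "-(complex_of_real t ^ 2 * (c i * (b i * ((b i - 1) * MM (b i - 1 - 1) t - MM (b i - 1) t) - (b i * MM (b i - 1) t - MM (b i) t))))
       - complex_of_real t * (c i * (b i * MM (b i - 1) t - MM (b i) t)) + complex_of_real t ^ 2 * (c i * MM (b i) t)
      = c i * (- (b i ^ 2) * MM (b i) t + (2 * b i + 1) * MM (b i + 1) t)" for i
  proof -
    define B where "B = b i - 2"
    have e1: "MM (b i - 1 - 1) t = MM B t" unfolding B_def by (simp add: algebra_simps)
    have e2: "MM (b i - 1) t = complex_of_real t * MM B t" using MM_shift[OF t, of B 1] unfolding B_def by (simp add: algebra_simps)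
    have e3: "MM (b i) t = complex_of_real t ^ 2 * MM B t" using MM_shift[OF t, of B 2] unfolding B_def by (simp add: algebra_simps)
    have e4: "MM (b i + 1) t = complex_of_real t ^ 3 * MM B t" using MM_shift[OF t, of B 3] unfolding B_def by (simp add: algebra_simps)
    show ?thesis unfolding e1 e2 e3 e4 by (simp add: algebra_simps power2_eq_square power3_eq_cube)
  qed
  show ?thesis unfolding Aop_def d2 g[OF t] d1[OF t] sum_aux using trm by simp
qed


lemma G_van:
  assumes nz: "\<forall>m::nat. 2*a + of_nat m \<noteq> (0::complex)"
  shows "v > n \<Longrightarrow> G a (2*n+1) v = 0"
proof (induction n arbitrary: v)
  case 0
  then obtain w where "v = Suc w" by (cases v) auto
  then show ?case using G1_zero[OF nz] by simp
next
  case (Suc n)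
  then obtain w where w: "v = Suc w" "w > n" by (cases v) auto
  have "G a (2*n+1+2) (Suc w) = (a + of_nat (Suc w))^2 * G a (2*n+1) (Suc w) - (2*a + 2 * of_nat w + 1) * G a (2*n+1) w"
    by (rule G_rec[OF nz])
  also have "\<dots> = 0" using Suc.IH[of w] Suc.IH[of "Suc w"] w by simp
  finally show ?case using w by (simp add: algebra_simps)
qed

lemma G_0: "G a (k+2) 0 = a^2 * G a k 0"
  unfolding G_def by (simp add: power_add power2_eq_square field_simps)

lemma G_00: "a \<noteq> 0 \<Longrightarrow> G a 1 0 = 1"
  unfolding G_def Kc_def by simp

lemma main_iter:
  assumes nz: "\<forall>m::nat. 2*a + of_nat m \<noteq> (0::complex)"
  shows "t > 0 \<Longrightarrow> (Aop ^^ n) (\<lambda>t. exp (- complex_of_real t) * complex_of_real t powr a) t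
     = (\<Sum>i\<le>n. ((-1)^n * G a (2*n+1) i) * MM (a + of_nat i) t)"
proof (induction n arbitrary: t)
  case 0
  have "a \<noteq> 0" using nz[rule_format, of 0] by auto
  then show ?case using G_00 by (simp add: MM_def)
next
  case (Suc n)
  define X where "X = (\<lambda>i. (-1)^n * G a (2*n+1) i * (- ((a + of_nat i)^2) * MM (a + of_nat i) t))"
  define Y where "Y = (\<lambda>i. (-1)^n * G a (2*n+1) i * ((2 * (a + of_nat i) + 1) * MM (a + of_nat i + 1) t))"
  have "(Aop ^^ Suc n) (\<lambda>t. exp (- complex_of_real t) * complex_of_real t powr a) t
      = Aop ((Aop ^^ n) (\<lambda>t. exp (- complex_of_real t) * complex_of_real t powr a)) t" by simp
  also have "\<dots> = (\<Sum>i\<le>n. ((-1)^n * G a (2*n+1) i) * (- ((a + of_nat i) ^ 2) * MM (a + of_nat i) t + (2 * (a + of_nat i) + 1) * MM (a + of_nat i + 1) t))"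
    by (rule Aop_comb[OF Suc.IH Suc.prems])
  also have "\<dots> = (\<Sum>i\<le>n. X i) + (\<Sum>i\<le>n. Y i)"
    unfolding X_def Y_def sum.distrib[symmetric] by (rule sum.cong) (simp_all add: algebra_simps)
  also have "(\<Sum>i\<le>n. X i) = (\<Sum>i\<le>Suc n. X i)"
    using G_van[OF nz, of n "Suc n"] by (simp add: X_def)
  also have "\<dots> = X 0 + (\<Sum>i\<le>n. X (Suc i))" by (rule sum.atMost_Suc_shift)
  finally have L: "(Aop ^^ Suc n) (\<lambda>t. exp (- complex_of_real t) * complex_of_real t powr a) t
     = X 0 + (\<Sum>i\<le>n. X (Suc i) + Y i)" by (simp add: sum.distrib add.assoc)
  define F where "F = (\<lambda>i. ((-1)^(Suc n) * G a (2*(Suc n)+1) i) * MM (a + of_nat i) t)"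
  have R: "(\<Sum>i\<le>Suc n. F i) = F 0 + (\<Sum>i\<le>n. F (Suc i))" by (rule sum.atMost_Suc_shift)
  have h0: "X 0 = F 0" unfolding X_def F_def using G_0[of a "2*n+1"] by (simp add: algebra_simps)
  have hi: "X (Suc i) + Y i = F (Suc i)" for i
  proof -
    have "G a (2*n+1+2) (Suc i) = (a + of_nat (Suc i))^2 * G a (2*n+1) (Suc i) - (2*a + 2 * of_nat i + 1) * G a (2*n+1) i"
      by (rule G_rec[OF nz])
    then have g: "G a (2*(Suc n)+1) (Suc i) = (a + of_nat (Suc i))^2 * G a (2*n+1) (Suc i) - (2*a + 2 * of_nat i + 1) * G a (2*n+1) i"
      by (simp add: algebra_simps)
    have m: "MM (a + of_nat i + 1) t = MM (a + of_nat (Suc i)) t" by (simp add: add_ac)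
    show ?thesis unfolding X_def Y_def F_def g m by (simp add: algebra_simps)
  qed
  show ?case unfolding L F_def[symmetric] R h0 using hi by simp
qed


lemma coef_eq:
  assumes nz: "\<forall>m::nat. 2*a + of_nat m \<noteq> (0::complex)"
  shows "G a k v = 2^(v+1) * pochhammer (a + 1/2) v / of_nat (fact v) *
        (\<Sum>\<mu>=0..v. of_nat (v choose \<mu>) * (-1)^\<mu> * Gamma (2*a + of_nat \<mu>)
            / Gamma (2*a + of_nat \<mu> + of_nat v + 1) * (a + of_nat \<mu>)^k)"
proof -
  have gg: "Gamma (2*a + of_nat \<mu>) / Gamma (2*a + of_nat \<mu> + of_nat v + 1) = 1 / pochhammer (2*a + of_nat \<mu>) (v+1)" for \<mu>
  proof -
    have "2*a + of_nat \<mu> \<notin> \<int>\<^sub>\<le>\<^sub>0"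
    proof
      assume "2*a + of_nat \<mu> \<in> \<int>\<^sub>\<le>\<^sub>0"
      then obtain k where h: "2*a + of_nat \<mu> = - of_nat k" by (auto elim!: nonpos_Ints_cases')
      have "2*a + of_nat \<mu> + of_nat k = 0" by (simp only: h) simp
      then have "2*a + of_nat (\<mu> + k) = 0" by (simp only: of_nat_add add.assoc)
      with nz show False by blast
    qed
    from pochhammer_Gamma[OF this, of "v+1"]
    show ?thesis by (simp add: add_ac)
  qed
  have tt: "of_nat (v choose \<mu>) * (-1)^\<mu> * Gamma (2*a + of_nat \<mu>)
            / Gamma (2*a + of_nat \<mu> + of_nat v + 1) * (a + of_nat \<mu>)^k
        = of_nat (v choose \<mu>) * (-1)^\<mu> / pochhammer (2*a + of_nat \<mu>) (v+1) * (a + of_nat \<mu>)^k" for \<mu>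
  proof -
    have "of_nat (v choose \<mu>) * (-1)^\<mu> * Gamma (2*a + of_nat \<mu>)
            / Gamma (2*a + of_nat \<mu> + of_nat v + 1) * (a + of_nat \<mu>)^k
       = of_nat (v choose \<mu>) * (-1)^\<mu> * (Gamma (2*a + of_nat \<mu>)
            / Gamma (2*a + of_nat \<mu> + of_nat v + 1)) * (a + of_nat \<mu>)^k"
      by (simp only: times_divide_eq_right)
    also have "\<dots> = of_nat (v choose \<mu>) * (-1)^\<mu> / pochhammer (2*a + of_nat \<mu>) (v+1) * (a + of_nat \<mu>)^k"
      unfolding gg by simp
    finally show ?thesis .
  qed
  show ?thesis unfolding G_def Kc_def tt ..
qed

theorem lemma2p2:
  fixes \<alpha> :: complex and n :: nat and x :: real
  assumes "Re \<alpha> > -1/2" and "\<alpha> \<noteq> 0" and "x > 0"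
  shows "p_poly n \<alpha> x =
    (\<Sum>\<nu>=0..n.
       (2^(\<nu>+1) * pochhammer (\<alpha> + 1/2) \<nu> / of_nat (fact \<nu>) *
        (\<Sum>\<mu>=0..\<nu>. of_nat (\<nu> choose \<mu>) * (-1)^\<mu> * Gamma (2*\<alpha> + of_nat \<mu>)
            / Gamma (2*\<alpha> + of_nat \<mu> + of_nat \<nu> + 1) * (\<alpha> + of_nat \<mu>)^(2*n+1)))
       * (complex_of_real x)^\<nu>)"
proof -
  have nz: "\<forall>m::nat. 2*\<alpha> + of_nat m \<noteq> 0"
  proof
    fix m :: nat
    show "2*\<alpha> + of_nat m \<noteq> 0"
    proof (cases m)
      case 0 then show ?thesis using assms(2) by simp
    next
      case (Suc k)
      have r: "Re (2*\<alpha> + of_nat m) > 0" using assms(1) Suc by simp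
      show ?thesis
      proof
        assume "2*\<alpha> + of_nat m = 0"
        then have "Re (2*\<alpha> + of_nat m) = 0" by (simp only: zero_complex.sel)
        with r show False by linarith
      qed
    qed
  qed
  have xz: "complex_of_real x \<noteq> 0" using assms(3) by simp
  have pw: "complex_of_real x powr (-\<alpha>) * complex_of_real x powr \<alpha> = 1"
    using xz by (simp add: powr_def exp_minus field_simps)
  have ex: "exp (complex_of_real x) * exp (- complex_of_real x) = 1" by (simp add: exp_minus field_simps)
  have "p_poly n \<alpha> x = (-1)^n * exp (complex_of_real x) * complex_of_real x powr (-\<alpha>) *
      (\<Sum>i\<le>n. ((-1)^n * G \<alpha> (2*n+1) i) * (complex_of_real x ^ i * MM \<alpha> x))"
    unfolding p_poly_def main_iter[OF nz assms(3)] MM_shift[OF assms(3)] by simp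
  also have "\<dots> = (\<Sum>i\<le>n. G \<alpha> (2*n+1) i * complex_of_real x ^ i) *
      (((-1)^n * (-1)^n) * (exp (complex_of_real x) * exp (- complex_of_real x)) * (complex_of_real x powr (-\<alpha>) * complex_of_real x powr \<alpha>))"
    unfolding MM_def by (simp add: sum_distrib_left sum_distrib_right mult_ac)
  also have "\<dots> = (\<Sum>i\<le>n. G \<alpha> (2*n+1) i * complex_of_real x ^ i)"
    unfolding pw ex by (simp add: power_mult_distrib[symmetric])
  also have "\<dots> = (\<Sum>i=0..n. G \<alpha> (2*n+1) i * complex_of_real x ^ i)" by (simp add: atMost_atLeast0)
  finally show ?thesis unfolding coef_eq[OF nz] .
qed


end
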